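(* Let $\mathbf{k}$ be an algebraically closed field of characteristic zero, $t\ge2$, and $(n_1,\dots,n_t)$ a dimension vector with $n_1<n_2<\cdots<n_t$. Let $U_i=\mathbf{k}^{n_i}$ and let $Z$ be the variety of tuples $z=(A_1,B_1,\dots,A_{t-1},B_{t-1})$ with $A_i:U_i\to U_{i+1}$, $B_i:U_{i+1}\to U_i$ linear, satisfying $B_1A_1=0$ and $B_{i+1}A_{i+1}=A_iB_i$ for $i=1,\dots,t-2$. Then a point $z\in Z$ belongs to the semistable locus $Z^{ss}$ if and only if $A_1,\dots,A_{t-1}$ are all injective.
   Context: Here $Z^{ss}$ is Nakajima's semistable locus for the action of $H=GL_{n_1}\times\cdots\times GL_{n_{t-1}}$ (acting by $A_i\mapsto h_{i+1}A_ih_i^{-1}$, $B_i\mapsto h_iB_ih_{i+1}^{-1}$, $h_t=\mathrm{id}$) with respect to the character $\chi(h)=\prod_i\det(h_i)^{-1}$; by Nakajima's criterion this is the set of $z\in Z$ such that the only tuple of subspaces $W_i\subseteq U_i$ ($i=1,\dots,t-1$) with $A_i(W_i)\subseteq W_{i+1}$ and $B_i(W_{i+1})\subseteq W_i$ for $i=1,\dots,t-2$ and $A_{t-1}(W_{t-1})=0$ is $W_1=\cdots=W_{t-1}=0$. *)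

theory Defs
  imports "HOL-Computational_Algebra.Polynomial" "Jordan_Normal_Form.Matrix"
begin

text \<open>Linear maps U_i = k^(n i) are represented as matrices; indices are 1-based as in the paper.
  A i : U_i -> U_(i+1) is an n(i+1) x n(i) matrix, B i : U_(i+1) -> U_i an n(i) x n(i+1) matrix.\<close>

definition in_Z :: "nat \<Rightarrow> (nat \<Rightarrow> nat) \<Rightarrow> (nat \<Rightarrow> 'a::field mat) \<Rightarrow> (nat \<Rightarrow> 'a mat) \<Rightarrow> bool" where
  "in_Z t n A B \<longleftrightarrow>
     (\<forall>i\<in>{1..t-1}. A i \<in> carrier_mat (n (i+1)) (n i) \<and> B i \<in> carrier_mat (n i) (n (i+1))) \<and>
     B 1 * A 1 = 0\<^sub>m (n 1) (n 1) \<and>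
     (\<forall>i\<in>{1..t-2}. B (i+1) * A (i+1) = A i * B i)"

definition is_subspace :: "nat \<Rightarrow> 'a::field vec set \<Rightarrow> bool" where
  "is_subspace m W \<longleftrightarrow> W \<subseteq> carrier_vec m \<and> 0\<^sub>v m \<in> W \<and>
     (\<forall>v\<in>W. \<forall>w\<in>W. v + w \<in> W) \<and> (\<forall>c. \<forall>v\<in>W. c \<cdot>\<^sub>v v \<in> W)"

text \<open>Nakajima's semistable locus, via the subspace criterion of the context.\<close>
definition semistable :: "nat \<Rightarrow> (nat \<Rightarrow> nat) \<Rightarrow> (nat \<Rightarrow> 'a::field mat) \<Rightarrow> (nat \<Rightarrow> 'a mat) \<Rightarrow> bool" where
  "semistable t n A B \<longleftrightarrow>
     (\<forall>W :: nat \<Rightarrow> 'a vec set.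
        ((\<forall>i\<in>{1..t-1}. is_subspace (n i) (W i)) \<and>
         (\<forall>i\<in>{1..t-2}. (\<forall>w\<in>W i. A i *\<^sub>v w \<in> W (i+1)) \<and> (\<forall>w\<in>W (i+1). B i *\<^sub>v w \<in> W i)) \<and>
         (\<forall>w\<in>W (t-1). A (t-1) *\<^sub>v w = 0\<^sub>v (n t)))
        \<longrightarrow> (\<forall>i\<in>{1..t-1}. W i = {0\<^sub>v (n i)}))"

end

theory Submission
  imports Defs
begin

lemma mat_vec_zero:
  assumes "M \<in> carrier_mat m k"
  shows "M *\<^sub>v 0\<^sub>v k = (0\<^sub>v m :: 'a::field vec)"
  using assms by (intro eq_vecI) (auto simp: row_def)

lemma subspace_image:
  assumes M: "(M :: 'a::field mat) \<in> carrier_mat m k" and S: "is_subspace k W"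
  shows "is_subspace m ((\<lambda>w. M *\<^sub>v w) ` W)"
proof -
  have c: "W \<subseteq> carrier_vec k" using S by (simp add: is_subspace_def)
  show ?thesis unfolding is_subspace_def
  proof (intro conjI ballI allI)
    show "(\<lambda>w. M *\<^sub>v w) ` W \<subseteq> carrier_vec m" using M c by auto
    show "0\<^sub>v m \<in> (\<lambda>w. M *\<^sub>v w) ` W"
      using S mat_vec_zero[OF M] unfolding is_subspace_def by (metis image_eqI)
  next
    fix v w assume "v \<in> (\<lambda>w. M *\<^sub>v w) ` W" "w \<in> (\<lambda>w. M *\<^sub>v w) ` W"
    then obtain x y where x: "x \<in> W" "v = M *\<^sub>v x" and y: "y \<in> W" "w = M *\<^sub>v y" by auto
    have "x + y \<in> W" using S x y by (simp add: is_subspace_def)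
    moreover have "x \<in> carrier_vec k" "y \<in> carrier_vec k" using x y c by auto
    moreover have "v + w = M *\<^sub>v (x + y)"
      using x y calculation(2,3) mult_add_distrib_mat_vec[OF M] by auto
    ultimately show "v + w \<in> (\<lambda>w. M *\<^sub>v w) ` W" by auto
  next
    fix a v assume "v \<in> (\<lambda>w. M *\<^sub>v w) ` W"
    then obtain x where x: "x \<in> W" "v = M *\<^sub>v x" by auto
    have "a \<cdot>\<^sub>v x \<in> W" using S x by (simp add: is_subspace_def)
    moreover have "a \<cdot>\<^sub>v v = M *\<^sub>v (a \<cdot>\<^sub>v x)"
      using x c mult_mat_vec[OF M] by auto
    ultimately show "a \<cdot>\<^sub>v v \<in> (\<lambda>w. M *\<^sub>v w) ` W" by auto
  qed
qed

lemma zero_subspace: "is_subspace m {0\<^sub>v m :: 'a::field vec}"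
  unfolding is_subspace_def by auto

lemma kernel_subspace:
  assumes M: "(M :: 'a::field mat) \<in> carrier_mat m k"
  shows "is_subspace k {v \<in> carrier_vec k. M *\<^sub>v v = 0\<^sub>v m}"
  unfolding is_subspace_def
proof (intro conjI ballI allI)
  show "0\<^sub>v k \<in> {v \<in> carrier_vec k. M *\<^sub>v v = 0\<^sub>v m}" using mat_vec_zero[OF M] by auto
next
  fix v w assume "v \<in> {v \<in> carrier_vec k. M *\<^sub>v v = 0\<^sub>v m}" "w \<in> {v \<in> carrier_vec k. M *\<^sub>v v = 0\<^sub>v m}"
  then show "v + w \<in> {v \<in> carrier_vec k. M *\<^sub>v v = 0\<^sub>v m}"
    using mult_add_distrib_mat_vec[OF M] by auto
next
  fix a v assume "v \<in> {v \<in> carrier_vec k. M *\<^sub>v v = 0\<^sub>v m}"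
  then show "a \<cdot>\<^sub>v v \<in> {v \<in> carrier_vec k. M *\<^sub>v v = 0\<^sub>v m}"
    using mult_mat_vec[OF M] by auto
qed auto

theorem proposition3:
  fixes t :: nat and n :: "nat \<Rightarrow> nat"
    and A B :: "nat \<Rightarrow> 'a::{alg_closed_field, field_char_0} mat"
  assumes "t \<ge> 2"
    and "\<forall>i\<in>{1..<t}. n i < n (i+1)"
    and "in_Z t n A B"
  shows "semistable t n A B \<longleftrightarrow>
         (\<forall>i\<in>{1..t-1}. inj_on (\<lambda>v. A i *\<^sub>v v) (carrier_vec (n i)))"
proof
  have Ac: "\<And>i. i \<in> {1..t-1} \<Longrightarrow> A i \<in> carrier_mat (n (i+1)) (n i)"
   and Bc: "\<And>i. i \<in> {1..t-1} \<Longrightarrow> B i \<in> carrier_mat (n i) (n (i+1))"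
   and rel: "\<And>i. i \<in> {1..t-2} \<Longrightarrow> B (i+1) * A (i+1) = A i * B i"
    using assms(3) unfolding in_Z_def by auto
  {
    assume ss: "semistable t n A B"
    show "\<forall>i\<in>{1..t-1}. inj_on (\<lambda>v. A i *\<^sub>v v) (carrier_vec (n i))"
    proof (rule ccontr)
      assume "\<not> ?thesis"
      then obtain i where i: "i \<in> {1..t-1}" and ni: "\<not> inj_on (\<lambda>v. A i *\<^sub>v v) (carrier_vec (n i))"
        by blast
      then obtain x y where xy: "x \<in> carrier_vec (n i)" "y \<in> carrier_vec (n i)" "x \<noteq> y"
        "A i *\<^sub>v x = A i *\<^sub>v y" unfolding inj_on_def by blast
      define K where "K = {v \<in> carrier_vec (n i). A i *\<^sub>v v = 0\<^sub>v (n (i+1))}"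
      have "x - y \<in> K" using xy Ac[OF i] mult_minus_distrib_mat_vec[OF Ac[OF i]]
        unfolding K_def by auto
      moreover have "x - y \<noteq> 0\<^sub>v (n i)"
      proof
        assume z: "x - y = 0\<^sub>v (n i)"
        have "x = y"
        proof (rule eq_vecI)
          fix j assume "j < dim_vec y"
          then have "(x - y) $ j = 0" using z xy by simp
          then show "x $ j = y $ j" using xy \<open>j < dim_vec y\<close> by simp
        qed (use xy in auto)
        thus False using xy by auto
      qed
      ultimately have Knz: "K \<noteq> {0\<^sub>v (n i)}" by auto
      define Wd where "Wd = rec_nat K (\<lambda>m S. (\<lambda>w. B (i - Suc m) *\<^sub>v w) ` S)"
      have Wd0: "Wd 0 = K" and WdS: "\<And>m. Wd (Suc m) = (\<lambda>w. B (i - Suc m) *\<^sub>v w) ` Wd m"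
        unfolding Wd_def by auto
      define W where "W = (\<lambda>j. if i < j then {0\<^sub>v (n j)} else Wd (i - j))"
      have Wi: "W i = K" unfolding W_def using Wd0 by auto
      have Wlt: "\<And>j. j < i \<Longrightarrow> W j = (\<lambda>w. B j *\<^sub>v w) ` W (j+1)"
      proof -
        fix j assume "j < i"
        then have e1: "i - j = Suc (i - Suc j)" and e2: "i - Suc (i - Suc j) = j" by auto
        have "W j = Wd (Suc (i - Suc j))" unfolding W_def using \<open>j < i\<close> e1 by simp
        also have "\<dots> = (\<lambda>w. B j *\<^sub>v w) ` Wd (i - Suc j)" using WdS[of "i - Suc j"] e2 by simp
        also have "Wd (i - Suc j) = W (j+1)" unfolding W_def using \<open>j < i\<close> by simp
        finally show "W j = (\<lambda>w. B j *\<^sub>v w) ` W (j+1)" .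
      qed
      have sub: "\<And>j. j \<in> {1..t-1} \<Longrightarrow> is_subspace (n j) (W j)"
      proof -
        fix j assume j: "j \<in> {1..t-1}"
        show "is_subspace (n j) (W j)"
        proof (cases "i < j")
          case True then show ?thesis unfolding W_def using zero_subspace by auto
        next
          case False
          define d where "d = i - j"
          have d: "j = i - d" "d \<le> i - 1" using j i False d_def by auto
          have "is_subspace (n (i - d)) (W (i - d))" using d(2)
          proof (induction d)
            case 0 then show ?case using Wi kernel_subspace[OF Ac[OF i]] K_def by auto
          next
            case (Suc d)
            have lt: "i - Suc d < i" using Suc.prems i by auto
            have e: "i - Suc d + 1 = i - d" using Suc.prems by auto
            have "i - Suc d \<in> {1..t-1}" using Suc.prems i by auto
            then show ?case using Wlt[OF lt] subspace_image[OF Bc] Suc e by auto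
          qed
          then show ?thesis using d by simp
        qed
      qed
      have Aw: "\<And>j. j \<in> {1..t-1} \<Longrightarrow> \<forall>w\<in>W j. A j *\<^sub>v w \<in> W (j+1)"
      proof -
        fix j assume j: "j \<in> {1..t-1}"
        show "\<forall>w\<in>W j. A j *\<^sub>v w \<in> W (j+1)"
        proof (cases "i \<le> j")
          case True
          show ?thesis
          proof (cases "i = j")
            case True then show ?thesis using Wi K_def W_def by auto
          next
            case False
            then show ?thesis using \<open>i \<le> j\<close> W_def mat_vec_zero[OF Ac[OF j]] by auto
          qed
        next
          case False
          define d where "d = i - Suc j"
          have d: "j = i - Suc d" "d \<le> i - 2" using j i False d_def by auto
          have hi: "1 < i" using j False by auto
          have "\<forall>w\<in>W (i - Suc d). A (i - Suc d) *\<^sub>v w \<in> W (i - Suc d + 1)" using d(2) hi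
          proof (induction d)
            case 0
            have lt: "i - 1 < i" using i by auto
            have e: "i - 1 + 1 = i" using i by auto
            have i1: "i - 1 \<in> {1..t-2}" "i - 1 \<in> {1..t-1}" using 0 i by auto
            show ?case
            proof
              fix w assume "w \<in> W (i - Suc 0)"
              then obtain u where u: "u \<in> K" "w = B (i-1) *\<^sub>v u" using Wlt[OF lt] e Wi by auto
              have "A (i-1) *\<^sub>v w = (A (i-1) * B (i-1)) *\<^sub>v u"
                using u Ac[OF i1(2)] Bc[OF i1(2)] e K_def by simp
              also have "\<dots> = (B i * A i) *\<^sub>v u" using rel[OF i1(1)] e by simp
              also have "\<dots> = B i *\<^sub>v 0\<^sub>v (n (i+1))" using u K_def Ac[OF i] Bc[OF i] by simp
              also have "\<dots> = 0\<^sub>v (n i)" using mat_vec_zero[OF Bc[OF i]] .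
              finally show "A (i - Suc 0) *\<^sub>v w \<in> W (i - Suc 0 + 1)"
                using sub[OF i] e by (simp add: is_subspace_def)
            qed
          next
            case (Suc d)
            define j where "j = i - Suc (Suc d)"
            have lt: "j < i" "j + 1 < i" using Suc.prems i j_def by auto
            have e: "j + 1 = i - Suc d" "j + 2 = i - d" using Suc.prems j_def by auto
            have j1: "j \<in> {1..t-2}" "j \<in> {1..t-1}" "j+1 \<in> {1..t-1}" using Suc.prems i j_def by auto
            have IH: "\<forall>w\<in>W (j+1). A (j+1) *\<^sub>v w \<in> W (j + 2)" using Suc e by auto
            have Wc: "W (j+1) \<subseteq> carrier_vec (n (j+1))" using sub[OF j1(3)] by (simp add: is_subspace_def)
            have "\<forall>w\<in>W j. A j *\<^sub>v w \<in> W (j+1)"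
            proof
              fix w assume "w \<in> W j"
              then obtain u where u: "u \<in> W (j+1)" "w = B j *\<^sub>v u" using Wlt[OF lt(1)] by auto
              have uc: "u \<in> carrier_vec (n (j+1))" using u Wc by auto
              have "A j *\<^sub>v w = (A j * B j) *\<^sub>v u"
                using u uc Ac[OF j1(2)] Bc[OF j1(2)] by simp
              also have "\<dots> = (B (j+1) * A (j+1)) *\<^sub>v u" using rel[OF j1(1)] by simp
              also have "\<dots> = B (j+1) *\<^sub>v (A (j+1) *\<^sub>v u)" using uc Ac[OF j1(3)] Bc[OF j1(3)] by simp
              finally show "A j *\<^sub>v w \<in> W (j+1)"
                using IH u Wlt[OF lt(2)] by (auto simp: add.assoc)
            qed
            then show ?case using j_def by simp
          qed
          then show ?thesis using d by simp
        qed
      qed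
      have Bw: "\<And>j. j \<in> {1..t-1} \<Longrightarrow> \<forall>w\<in>W (j+1). B j *\<^sub>v w \<in> W j"
      proof -
        fix j assume j: "j \<in> {1..t-1}"
        show "\<forall>w\<in>W (j+1). B j *\<^sub>v w \<in> W j"
        proof (cases "j < i")
          case True then show ?thesis using Wlt by auto
        next
          case False
          then have "W (j+1) = {0\<^sub>v (n (j+1))}" unfolding W_def by auto
          then show ?thesis using mat_vec_zero[OF Bc[OF j]] sub[OF j] by (auto simp: is_subspace_def)
        qed
      qed
      have last: "\<forall>w\<in>W (t-1). A (t-1) *\<^sub>v w = 0\<^sub>v (n t)"
      proof (cases "i = t - 1")
        case True then show ?thesis using Wi K_def assms(1) by auto
      next
        case False
        then have "i < t - 1" using i by auto
        moreover have "t - 1 \<in> {1..t-1}" "t - 1 + 1 = t" using assms(1) by auto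
        ultimately show ?thesis unfolding W_def using mat_vec_zero[OF Ac] by force
      qed
      have "\<forall>i\<in>{1..t-1}. W i = {0\<^sub>v (n i)}"
        using ss unfolding semistable_def
        apply (elim allE[of _ W] mp)
        using sub Aw Bw last by auto
      then show False using Knz Wi i by auto
    qed
  }
  {
    assume inj: "\<forall>i\<in>{1..t-1}. inj_on (\<lambda>v. A i *\<^sub>v v) (carrier_vec (n i))"
    show "semistable t n A B"
      unfolding semistable_def
    proof (intro allI impI)
      fix W :: "nat \<Rightarrow> 'a vec set"
      assume h: "(\<forall>i\<in>{1..t-1}. is_subspace (n i) (W i)) \<and>
         (\<forall>i\<in>{1..t-2}. (\<forall>w\<in>W i. A i *\<^sub>v w \<in> W (i+1)) \<and> (\<forall>w\<in>W (i+1). B i *\<^sub>v w \<in> W i)) \<and>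
         (\<forall>w\<in>W (t-1). A (t-1) *\<^sub>v w = 0\<^sub>v (n t))"
      have key: "\<And>j w. j \<in> {1..t-1} \<Longrightarrow> w \<in> W j \<Longrightarrow> A j *\<^sub>v w = 0\<^sub>v (n (j+1)) \<Longrightarrow> w = 0\<^sub>v (n j)"
      proof -
        fix j w assume j: "j \<in> {1..t-1}" and w: "w \<in> W j" and z: "A j *\<^sub>v w = 0\<^sub>v (n (j+1))"
        have wc: "w \<in> carrier_vec (n j)" using h j w by (auto simp: is_subspace_def)
        have "A j *\<^sub>v w = A j *\<^sub>v 0\<^sub>v (n j)" using z mat_vec_zero[OF Ac[OF j]] by simp
        moreover have "inj_on (\<lambda>v. A j *\<^sub>v v) (carrier_vec (n j))" using inj j by blast
        ultimately show "w = 0\<^sub>v (n j)" using wc zero_carrier_vec[of "n j"] by (meson inj_onD)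
      qed
      have "\<And>d. d \<le> t - 2 \<Longrightarrow> W (t - 1 - d) = {0\<^sub>v (n (t - 1 - d))}"
      proof -
        fix d show "d \<le> t - 2 \<Longrightarrow> W (t - 1 - d) = {0\<^sub>v (n (t - 1 - d))}"
        proof (induction d)
          case 0
          have j: "t - 1 \<in> {1..t-1}" "t - 1 + 1 = t" using assms(1) by auto
          have "\<forall>w\<in>W (t-1). w = 0\<^sub>v (n (t-1))" using key[OF j(1)] h j(2) by metis
          moreover have "0\<^sub>v (n (t-1)) \<in> W (t-1)" using h j by (auto simp: is_subspace_def)
          ultimately have "W (t-1) = {0\<^sub>v (n (t-1))}" by blast
          then show ?case by simp
        next
          case (Suc d)
          define j where "j = t - 1 - Suc d"
          have j: "j \<in> {1..t-1}" "j \<in> {1..t-2}" "j + 1 = t - 1 - d" using Suc.prems j_def by auto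
          have IH: "W (j+1) = {0\<^sub>v (n (j+1))}" using Suc j by auto
          have "\<forall>w\<in>W j. w = 0\<^sub>v (n j)"
          proof
            fix w assume w: "w \<in> W j"
            then have "A j *\<^sub>v w \<in> W (j+1)" using h j by blast
            then show "w = 0\<^sub>v (n j)" using key[OF j(1) w] IH by auto
          qed
          moreover have "0\<^sub>v (n j) \<in> W j" using h j by (auto simp: is_subspace_def)
          ultimately have "W j = {0\<^sub>v (n j)}" by blast
          then show ?case using j_def by simp
        qed
      qed
      then show "\<forall>i\<in>{1..t-1}. W i = {0\<^sub>v (n i)}"
      proof -
        assume H: "\<And>d. d \<le> t - 2 \<Longrightarrow> W (t - 1 - d) = {0\<^sub>v (n (t - 1 - d))}"
        show ?thesis
        proof
          fix i assume i: "i \<in> {1..t-1}"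
          then have "i = t - 1 - (t - 1 - i)" "t - 1 - i \<le> t - 2" by auto
          then show "W i = {0\<^sub>v (n i)}" using H by metis
        qed
      qed
    qed
  }
qed

end
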